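(* Let $\mathfrak{u}=(U_i,u_i,u^i)_{i\in\mathbb Z}$ be a representation of $\mathcal Z$ and $\mathfrak{u}^\vee$ its dual. Then $\mathfrak{u}$ is pure (resp. nontrivial, resp. a special chain) if and only if $\mathfrak{u}^\vee$ is pure (resp. nontrivial, resp. a special chain). Moreover, $\mathfrak{u}$ is a linked chain if and only if $\mathfrak{u}^\vee$ is a colinked chain. Finally, for a subset $H\subseteq\mathbb Z$, $\mathfrak{u}$ has support $H$ if and only if $\mathfrak{u}^\vee$ has cosupport $H$.
   Context: Let $k$ be a field. $\mathcal Z$ is the quiver with vertex set $\mathbb Z$ and, for each $i\in\mathbb Z$, arrows $\alpha^i\colon i\to i+1$ and $\alpha_i\colon i+1\to i$. A representation $\mathfrak{u}=(U_i,u_i,u^i)_{i\in\mathbb Z}$ consists of finite-dimensional $k$-vector spaces $U_i$ and linear maps $u^i\colon U_i\to U_{i+1}$, $u_i\colon U_{i+1}\to U_i$. Its dual is $\mathfrak{u}^\vee=(U_i^\vee,(u^i)^\vee,(u_i)^\vee)_{i\in\mathbb Z}$, i.e. the map associated to $\alpha_i$ is $(u^i)^\vee$ and to $\alpha^i$ is $(u_i)^\vee$. Compositions: $u^i_i=\mathrm{Id}$, $u^i_j=u^{j-1}\circ\cdots\circ u^i$ for $j>i$, $u^i_j=u_j\circ\cdots\circ u_{i-1}$ for $j<i$. The representation is pure if all $U_i$ have the same dimension, nontrivial if $U_i\neq0$ for all $i$. A special chain: $u_i\circ u^i=0$ and $u^i\circ u_i=0$ for all $i$. A linked chain: special chain with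 $\ker(u_{i-1})\cap\ker(u^i)=0$ for all $i$. A colinked chain: special chain with $\mathrm{Im}(u_i)+\mathrm{Im}(u^{i-1})=U_i$ for all $i$. $H\subseteq\mathbb Z$ is a support if for each $i\in\mathbb Z$ there is $j\in H$ with $u^j_i$ surjective, and a cosupport if for each $i$ there is $j\in H$ with $u^i_j$ injective. *)

theory Defs
  imports Main HOL.Vector_Spaces "HOL-Library.Function_Algebras"
begin

text \<open>A representation of the quiver Z over a field 'a is modelled by a
scalar multiplication scale on an ambient abelian group 'v (making it a
vector space), a family U of finite-dimensional subspaces U i (i in Z), and
maps up i : U i \<rightarrow> U (i+1) (arrow alpha^i) and dn i : U (i+1) \<rightarrow> U i
(arrow alpha_i), linear on the relevant subspaces.  Only the values of the
maps on the subspaces matter.\<close>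

definition lin_on ::
  "('a \<Rightarrow> 'v \<Rightarrow> 'v) \<Rightarrow> ('a \<Rightarrow> 'w \<Rightarrow> 'w) \<Rightarrow> 'v set \<Rightarrow> 'w set \<Rightarrow> ('v::ab_group_add \<Rightarrow> 'w::ab_group_add) \<Rightarrow> bool"
  where "lin_on s1 s2 A B f \<longleftrightarrow>
     (\<forall>x\<in>A. f x \<in> B) \<and> (\<forall>x\<in>A. \<forall>y\<in>A. f (x + y) = f x + f y) \<and>
     (\<forall>c. \<forall>x\<in>A. f (s1 c x) = s2 c (f x))"

definition fin_dim_subspace :: "('a::field \<Rightarrow> 'v::ab_group_add \<Rightarrow> 'v) \<Rightarrow> 'v set \<Rightarrow> bool"
  where "fin_dim_subspace s A \<longleftrightarrow>
     module.subspace s A \<and> (\<exists>B. finite B \<and> B \<subseteq> A \<and> module.span s B = A)"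

definition is_rep ::
  "('a::field \<Rightarrow> 'v::ab_group_add \<Rightarrow> 'v) \<Rightarrow> (int \<Rightarrow> 'v set) \<Rightarrow> (int \<Rightarrow> 'v \<Rightarrow> 'v) \<Rightarrow> (int \<Rightarrow> 'v \<Rightarrow> 'v) \<Rightarrow> bool"
  where "is_rep s U up dn \<longleftrightarrow> vector_space s \<and>
     (\<forall>i. fin_dim_subspace s (U i) \<and> lin_on s s (U i) (U (i+1)) (up i)
          \<and> lin_on s s (U (i+1)) (U i) (dn i))"

definition dual_scale :: "'a::field \<Rightarrow> ('v \<Rightarrow> 'a) \<Rightarrow> ('v \<Rightarrow> 'a)"
  where "dual_scale c \<phi> = (\<lambda>x. c * \<phi> x)"

definition dual_space :: "('a::field \<Rightarrow> 'v::ab_group_add \<Rightarrow> 'v) \<Rightarrow> 'v set \<Rightarrow> ('v \<Rightarrow> 'a) set"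
  where "dual_space s A = {\<phi>. lin_on s (*) A UNIV \<phi> \<and> (\<forall>x. x \<notin> A \<longrightarrow> \<phi> x = 0)}"

definition dual_map :: "'v set \<Rightarrow> ('v \<Rightarrow> 'v) \<Rightarrow> ('v \<Rightarrow> 'a::zero) \<Rightarrow> ('v \<Rightarrow> 'a)"
  where "dual_map A f \<phi> = (\<lambda>x. if x \<in> A then \<phi> (f x) else 0)"

text \<open>The dual representation: spaces U_i^dual; the map for alpha^i is
(u_i)^dual : U_i^dual \<rightarrow> U_{i+1}^dual and the map for alpha_i is
(u^i)^dual : U_{i+1}^dual \<rightarrow> U_i^dual.\<close>

definition dual_U :: "('a::field \<Rightarrow> 'v::ab_group_add \<Rightarrow> 'v) \<Rightarrow> (int \<Rightarrow> 'v set) \<Rightarrow> int \<Rightarrow> ('v \<Rightarrow> 'a) set"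
  where "dual_U s U i = dual_space s (U i)"

definition dual_up :: "(int \<Rightarrow> 'v set) \<Rightarrow> (int \<Rightarrow> 'v \<Rightarrow> 'v) \<Rightarrow> int \<Rightarrow> ('v \<Rightarrow> 'a::zero) \<Rightarrow> ('v \<Rightarrow> 'a)"
  where "dual_up U dn i = dual_map (U (i+1)) (dn i)"

definition dual_dn :: "(int \<Rightarrow> 'v set) \<Rightarrow> (int \<Rightarrow> 'v \<Rightarrow> 'v) \<Rightarrow> int \<Rightarrow> ('v \<Rightarrow> 'a::zero) \<Rightarrow> ('v \<Rightarrow> 'a)"
  where "dual_dn U up i = dual_map (U i) (up i)"

fun upcomp :: "(int \<Rightarrow> 'w \<Rightarrow> 'w) \<Rightarrow> int \<Rightarrow> nat \<Rightarrow> 'w \<Rightarrow> 'w" where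
  "upcomp up i 0 = id"
| "upcomp up i (Suc n) = up (i + int n) \<circ> upcomp up i n"

fun dncomp :: "(int \<Rightarrow> 'w \<Rightarrow> 'w) \<Rightarrow> int \<Rightarrow> nat \<Rightarrow> 'w \<Rightarrow> 'w" where
  "dncomp dn i 0 = id"
| "dncomp dn i (Suc n) = dn (i - int n - 1) \<circ> dncomp dn i n"

definition comp_map :: "(int \<Rightarrow> 'w \<Rightarrow> 'w) \<Rightarrow> (int \<Rightarrow> 'w \<Rightarrow> 'w) \<Rightarrow> int \<Rightarrow> int \<Rightarrow> 'w \<Rightarrow> 'w"
  where "comp_map up dn i j = (if i \<le> j then upcomp up i (nat (j - i)) else dncomp dn i (nat (i - j)))"

definition pure :: "('a::field \<Rightarrow> 'w::ab_group_add \<Rightarrow> 'w) \<Rightarrow> (int \<Rightarrow> 'w set) \<Rightarrow> bool"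
  where "pure s U \<longleftrightarrow> (\<forall>i j. vector_space.dim s (U i) = vector_space.dim s (U j))"

definition nontrivial :: "(int \<Rightarrow> 'w::zero set) \<Rightarrow> bool"
  where "nontrivial U \<longleftrightarrow> (\<forall>i. U i \<noteq> {0})"

definition special_chain :: "(int \<Rightarrow> 'w::zero set) \<Rightarrow> (int \<Rightarrow> 'w \<Rightarrow> 'w) \<Rightarrow> (int \<Rightarrow> 'w \<Rightarrow> 'w) \<Rightarrow> bool"
  where "special_chain U up dn \<longleftrightarrow>
    (\<forall>i. (\<forall>x\<in>U i. dn i (up i x) = 0) \<and> (\<forall>x\<in>U (i+1). up i (dn i x) = 0))"

definition linked_chain :: "(int \<Rightarrow> 'w::zero set) \<Rightarrow> (int \<Rightarrow> 'w \<Rightarrow> 'w) \<Rightarrow> (int \<Rightarrow> 'w \<Rightarrow> 'w) \<Rightarrow> bool"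
  where "linked_chain U up dn \<longleftrightarrow> special_chain U up dn \<and>
    (\<forall>i. {x \<in> U i. dn (i - 1) x = 0 \<and> up i x = 0} = {0})"

definition colinked_chain :: "(int \<Rightarrow> 'w::ab_group_add set) \<Rightarrow> (int \<Rightarrow> 'w \<Rightarrow> 'w) \<Rightarrow> (int \<Rightarrow> 'w \<Rightarrow> 'w) \<Rightarrow> bool"
  where "colinked_chain U up dn \<longleftrightarrow> special_chain U up dn \<and>
    (\<forall>i. {a + b | a b. a \<in> dn i ` U (i+1) \<and> b \<in> up (i - 1) ` U (i - 1)} = U i)"

definition is_support :: "(int \<Rightarrow> 'w set) \<Rightarrow> (int \<Rightarrow> 'w \<Rightarrow> 'w) \<Rightarrow> (int \<Rightarrow> 'w \<Rightarrow> 'w) \<Rightarrow> int set \<Rightarrow> bool"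
  where "is_support U up dn H \<longleftrightarrow> (\<forall>i. \<exists>j\<in>H. comp_map up dn j i ` U j = U i)"

definition is_cosupport :: "(int \<Rightarrow> 'w set) \<Rightarrow> (int \<Rightarrow> 'w \<Rightarrow> 'w) \<Rightarrow> (int \<Rightarrow> 'w \<Rightarrow> 'w) \<Rightarrow> int set \<Rightarrow> bool"
  where "is_cosupport U up dn H \<longleftrightarrow> (\<forall>i. \<exists>j\<in>H. inj_on (comp_map up dn i j) (U i))"

end

theory Submission
  imports Defs
begin


lemma sum_fun_apply': "(sum f A) x = sum (\<lambda>a. f a x) A"
  by (induction A rule: infinite_finite_induct) auto

lemma lin_on_zero: "lin_on s1 s2 A B f \<Longrightarrow> 0 \<in> A \<Longrightarrow> f 0 = 0"
  unfolding lin_on_def by (metis add.right_neutral add_left_cancel)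

lemma lin_on_diff: "lin_on s1 s2 A B f \<Longrightarrow> x \<in> A \<Longrightarrow> y \<in> A \<Longrightarrow> x - y \<in> A \<Longrightarrow> f (x - y) = f x - f y"
  unfolding lin_on_def by (metis diff_add_cancel eq_diff_eq)

lemma lin_on_comp: "lin_on s1 s2 A B f \<Longrightarrow> lin_on s2 s3 B C g \<Longrightarrow> lin_on s1 s3 A C (g \<circ> f)"
  unfolding lin_on_def by auto

lemma lin_on_id: "lin_on s s A A id"
  unfolding lin_on_def by auto

lemma lin_on_subset: "lin_on s1 s2 A B f \<Longrightarrow> A' \<subseteq> A \<Longrightarrow> lin_on s1 s2 A' B f"
  unfolding lin_on_def by blast

lemma vs_field: "vector_space ((*) :: 'a::field \<Rightarrow> 'a \<Rightarrow> 'a)"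
  by unfold_locales (auto simp: algebra_simps)

lemma vs_dual: "vector_space (dual_scale :: 'a::field \<Rightarrow> ('v \<Rightarrow> 'a) \<Rightarrow> ('v \<Rightarrow> 'a))"
  by unfold_locales (auto simp: dual_scale_def fun_eq_iff algebra_simps)

lemma lin0: "Vector_Spaces.linear s1 s2 h \<Longrightarrow> h 0 = 0"
  using module_hom.zero[of s1 s2 h] by (simp add: module_hom_iff_linear)
lemma linadd: "Vector_Spaces.linear s1 s2 h \<Longrightarrow> h (x + y) = h x + h y"
  using module_hom.add[of s1 s2 h] by (simp add: module_hom_iff_linear)
lemma linscale: "Vector_Spaces.linear s1 s2 h \<Longrightarrow> h (s1 c x) = s2 c (h x)"
  using module_hom.scale[of s1 s2 h] by (simp add: module_hom_iff_linear)

context vector_space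
begin

lemma core:
  fixes g :: "'b \<Rightarrow> 'a"
  assumes "independent S"
  obtains h where "Vector_Spaces.linear scale ((*) :: 'a \<Rightarrow> 'a \<Rightarrow> 'a) h" "\<forall>v\<in>S. h v = g v"
proof -
  interpret P: vector_space_pair scale "(*) :: 'a \<Rightarrow> 'a \<Rightarrow> 'a"
    by (intro_locales) (use vs_field in \<open>auto simp: vector_space_def\<close>)
  show ?thesis using P.linear_independent_extend[OF assms, of g] that by blast
qed

lemma restr_dual:
  assumes "Vector_Spaces.linear scale ((*) :: 'a \<Rightarrow> 'a \<Rightarrow> 'a) h" "subspace B"
  shows "(\<lambda>x. if x \<in> B then h x else 0) \<in> dual_space scale B"
proof -
  interpret L: Vector_Spaces.linear scale "(*) :: 'a \<Rightarrow> 'a \<Rightarrow> 'a" h by fact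
  show ?thesis using assms(2)
    by (auto simp: dual_space_def lin_on_def subspace_add subspace_scale L.add L.scale)
qed

lemma dual_zero: "0 \<in> dual_space scale B"
  by (auto simp: dual_space_def lin_on_def)

lemma dual_add:
  assumes "subspace B" "\<phi> \<in> dual_space scale B" "\<psi> \<in> dual_space scale B"
  shows "\<phi> + \<psi> \<in> dual_space scale B"
  using assms by (auto simp: dual_space_def lin_on_def algebra_simps)

lemma dual_map_in:
  assumes "subspace A" "lin_on scale scale A B T" "\<phi> \<in> dual_space scale B"
  shows "dual_map A T \<phi> \<in> dual_space scale A"
  using assms by (auto simp: subspace_add subspace_scale simp: dual_space_def lin_on_def dual_map_def)

lemma basis_of:
  assumes "subspace W"
  obtains W0 where "W0 \<subseteq> W" "independent W0" "span W0 = W"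
proof -
  obtain W0 where "W0 \<subseteq> W" "independent W0" "W \<subseteq> span W0"
    using maximal_independent_subset by blast
  moreover have "span W0 \<subseteq> W" using span_minimal[OF \<open>W0 \<subseteq> W\<close> assms] .
  ultimately show ?thesis using that by blast
qed

lemma sep:
  assumes "subspace A" "W \<subseteq> A" "subspace W" "y \<in> A" "y \<notin> W"
  obtains \<phi> where "\<phi> \<in> dual_space scale A" "\<forall>w\<in>W. \<phi> w = 0" "\<phi> y \<noteq> 0"
proof -
  obtain W0 where W0: "W0 \<subseteq> W" "independent W0" "span W0 = W"
    using basis_of[OF assms(3)] by blast
  have "independent (insert y W0)"
    using W0 assms(5) by (intro independent_insertI) auto
  then obtain h where h: "Vector_Spaces.linear scale ((*) :: 'a \<Rightarrow> 'a \<Rightarrow> 'a) h"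
    "\<forall>v\<in>insert y W0. h v = (if v = y then 1 else 0)"
    using core[of "insert y W0" "\<lambda>v. if v = y then 1 else 0"] by blast
  interpret L: Vector_Spaces.linear scale "(*) :: 'a \<Rightarrow> 'a \<Rightarrow> 'a" h by fact
  have "\<forall>w\<in>W. h w = 0"
  proof
    fix w assume "w \<in> W"
    then have "w \<in> span W0" using W0 by simp
    then show "h w = 0"
      by (rule L.eq_0_on_span[rotated]) (use h W0 assms(5) in auto)
  qed
  then show ?thesis
    using that[OF restr_dual[OF h(1) assms(1)]] assms h(2) by auto
qed

lemma ext:
  assumes "subspace B" "W \<subseteq> B" "subspace W" "lin_on scale (*) W UNIV \<chi>"
  obtains \<phi> where "\<phi> \<in> dual_space scale B" "\<forall>w\<in>W. \<phi> w = \<chi> w"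
proof -
  obtain W0 where W0: "W0 \<subseteq> W" "independent W0" "span W0 = W"
    using basis_of[OF assms(3)] by blast
  then obtain h where h: "Vector_Spaces.linear scale ((*) :: 'a \<Rightarrow> 'a \<Rightarrow> 'a) h"
    "\<forall>v\<in>W0. h v = \<chi> v"
    using core[OF W0(2), of \<chi>] by blast
  interpret L: Vector_Spaces.linear scale "(*) :: 'a \<Rightarrow> 'a \<Rightarrow> 'a" h by fact
  have "\<forall>w\<in>W. h w = \<chi> w"
  proof
    fix w assume "w \<in> W"
    then have "w \<in> span W0" using W0 by simp
    then have "w \<in> W \<and> h w = \<chi> w"
    proof (induction rule: span_induct)
      case base
      show ?case
      proof (rule subspaceI)
        show "0 \<in> Collect (\<lambda>w. w \<in> W \<and> h w = \<chi> w)"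
          using subspace_0[OF assms(3)] lin_on_zero[OF assms(4) subspace_0[OF assms(3)]] h(2) by simp
        show "x + y \<in> Collect (\<lambda>w. w \<in> W \<and> h w = \<chi> w)"
          if "x \<in> Collect (\<lambda>w. w \<in> W \<and> h w = \<chi> w)" "y \<in> Collect (\<lambda>w. w \<in> W \<and> h w = \<chi> w)" for x y
          using that assms(3,4) by (auto simp: subspace_add L.add lin_on_def)
        show "c *s x \<in> Collect (\<lambda>w. w \<in> W \<and> h w = \<chi> w)"
          if "x \<in> Collect (\<lambda>w. w \<in> W \<and> h w = \<chi> w)" for c x
          using that assms(3,4) by (auto simp: subspace_scale L.scale lin_on_def)
      qed
    next
      case (step x) then show ?case using h W0 by auto
    qed
    then show "h w = \<chi> w" by simp
  qed
  then show ?thesis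
    using that[OF restr_dual[OF h(1) assms(1)]] assms(2) by (simp add: subset_iff)
qed

end



context vector_space
begin

lemma transp:
  assumes A: "subspace A" and B: "subspace B" and f: "lin_on scale scale A B f"
    and psi: "lin_on scale (*) A UNIV \<psi>" and van: "\<forall>x\<in>A. f x = 0 \<longrightarrow> \<psi> x = 0"
  obtains \<phi> where "\<phi> \<in> dual_space scale B" "\<forall>x\<in>A. \<phi> (f x) = \<psi> x"
proof -
  have key: "\<psi> x = \<psi> x'" if "x \<in> A" "x' \<in> A" "f x = f x'" for x x'
  proof -
    have d: "x - x' \<in> A" using A that subspace_diff by blast
    have "f (x - x') = 0" using lin_on_diff[OF f that(1,2) d] that by simp
    then have "\<psi> (x - x') = 0" using van d by blast
    then show ?thesis using lin_on_diff[OF psi that(1,2) d] by simp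
  qed
  define \<chi> where "\<chi> y = \<psi> (SOME x. x \<in> A \<and> f x = y)" for y
  have chi: "\<chi> (f x) = \<psi> x" if "x \<in> A" for x
  proof -
    have "\<exists>x'. x' \<in> A \<and> f x' = f x" using that by blast
    then have "(SOME x'. x' \<in> A \<and> f x' = f x) \<in> A \<and> f (SOME x'. x' \<in> A \<and> f x' = f x) = f x"
      by (rule someI_ex)
    then show ?thesis unfolding \<chi>_def using key that by metis
  qed
  have sub: "subspace (f ` A)"
  proof (rule subspaceI)
    show "0 \<in> f ` A" using lin_on_zero[OF f subspace_0[OF A]] subspace_0[OF A]
      by (metis image_eqI)
    show "x + y \<in> f ` A" if hx: "x \<in> f ` A" and hy: "y \<in> f ` A" for x y
    proof -
      obtain a b where ab: "a \<in> A" "b \<in> A" "x = f a" "y = f b" using hx hy by blast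
      then have "x + y = f (a + b)" using f unfolding lin_on_def by simp
      moreover have "a + b \<in> A" using ab A subspace_add by blast
      ultimately show ?thesis by blast
    qed
    show "c *s x \<in> f ` A" if hx: "x \<in> f ` A" for c x
    proof -
      obtain a where ab: "a \<in> A" "x = f a" using hx by blast
      then have "c *s x = f (c *s a)" using f unfolding lin_on_def by simp
      moreover have "c *s a \<in> A" using ab A subspace_scale by blast
      ultimately show ?thesis by blast
    qed
  qed
  have sB: "f ` A \<subseteq> B" using f unfolding lin_on_def by auto
  have lchi: "lin_on scale (*) (f ` A) UNIV \<chi>"
    unfolding lin_on_def
  proof safe
    fix x y assume xy: "x \<in> A" "y \<in> A"
    then have "f x + f y = f (x + y)" using f unfolding lin_on_def by simp
    moreover have "x + y \<in> A" using xy A subspace_add by blast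
    ultimately show "\<chi> (f x + f y) = \<chi> (f x) + \<chi> (f y)"
      using psi xy chi unfolding lin_on_def by simp
  next
    fix c x assume xy: "x \<in> A"
    then have "c *s f x = f (c *s x)" using f unfolding lin_on_def by simp
    moreover have "c *s x \<in> A" using xy A subspace_scale by blast
    ultimately show "\<chi> (c *s f x) = c * \<chi> (f x)"
      using psi xy chi unfolding lin_on_def by simp
  qed simp
  obtain \<phi> where "\<phi> \<in> dual_space scale B" "\<forall>w\<in>f ` A. \<phi> w = \<chi> w"
    using ext[OF B sB sub lchi] by blast
  then show ?thesis using that chi by auto
qed

lemma surj_inj:
  assumes A: "subspace A" and B: "subspace B" and T: "lin_on scale scale A B T"
  shows "T ` A = B \<longleftrightarrow> inj_on (dual_map A T) (dual_space scale B)"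
proof
  assume s: "T ` A = B"
  show "inj_on (dual_map A T) (dual_space scale B)"
  proof (rule inj_onI)
    fix \<phi>1 \<phi>2 assume d: "\<phi>1 \<in> dual_space scale B" "\<phi>2 \<in> dual_space scale B"
      and e: "dual_map A T \<phi>1 = dual_map A T \<phi>2"
    show "\<phi>1 = \<phi>2"
    proof
      fix y show "\<phi>1 y = \<phi>2 y"
      proof (cases "y \<in> B")
        case True
        then obtain x where "x \<in> A" "y = T x" using s by blast
        then show ?thesis using fun_cong[OF e, of x] by (simp add: dual_map_def)
      next
        case False then show ?thesis using d by (simp add: dual_space_def)
      qed
    qed
  qed
next
  assume i: "inj_on (dual_map A T) (dual_space scale B)"
  have sub: "subspace (T ` A)"
  proof (rule subspaceI)
    show "0 \<in> T ` A" using lin_on_zero[OF T subspace_0[OF A]] subspace_0[OF A]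
      by (metis image_eqI)
    show "x + y \<in> T ` A" if hx: "x \<in> T ` A" and hy: "y \<in> T ` A" for x y
    proof -
      obtain a b where ab: "a \<in> A" "b \<in> A" "x = T a" "y = T b" using hx hy by blast
      then have "x + y = T (a + b)" using T unfolding lin_on_def by simp
      moreover have "a + b \<in> A" using ab A subspace_add by blast
      ultimately show ?thesis by blast
    qed
    show "c *s x \<in> T ` A" if hx: "x \<in> T ` A" for c x
    proof -
      obtain a where ab: "a \<in> A" "x = T a" using hx by blast
      then have "c *s x = T (c *s a)" using T unfolding lin_on_def by simp
      moreover have "c *s a \<in> A" using ab A subspace_scale by blast
      ultimately show ?thesis by blast
    qed
  qed
  have sB: "T ` A \<subseteq> B" using T unfolding lin_on_def by auto
  show "T ` A = B"
  proof (rule ccontr)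
    assume "T ` A \<noteq> B"
    then obtain y where y: "y \<in> B" "y \<notin> T ` A" using sB by blast
    obtain \<phi> where p: "\<phi> \<in> dual_space scale B" "\<forall>w\<in>T ` A. \<phi> w = 0" "\<phi> y \<noteq> 0"
      using sep[OF B sB sub y] by blast
    have "dual_map A T \<phi> = dual_map A T 0"
      using p(2) by (auto simp: dual_map_def fun_eq_iff)
    then have "\<phi> = 0" using i p(1) dual_zero by (meson inj_onD)
    then show False using p(3) by simp
  qed
qed

lemma dim_dual:
  assumes A: "subspace A" and fin: "finite B0" "B0 \<subseteq> A" "span B0 = A"
  shows "vector_space.dim dual_scale (dual_space scale A) = dim A"
proof -
  interpret D: vector_space "dual_scale :: 'a \<Rightarrow> ('b \<Rightarrow> 'a) \<Rightarrow> ('b \<Rightarrow> 'a)" by (rule vs_dual)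
  obtain BA where BA: "BA \<subseteq> A" "independent BA" "span BA = A"
    using basis_of[OF A] by blast
  have finBA: "finite BA"
    using independent_span_bound[OF fin(1) BA(2)] BA fin by auto
  have dA: "dim A = card BA" using basis_card_eq_dim[of BA A] BA by auto
  have "\<forall>b\<in>BA. \<exists>h. Vector_Spaces.linear scale ((*) :: 'a \<Rightarrow> 'a \<Rightarrow> 'a) h \<and>
        (\<forall>v\<in>BA. h v = (if v = b then 1 else 0))"
  proof
    fix b assume "b \<in> BA"
    obtain h where "Vector_Spaces.linear scale ((*) :: 'a \<Rightarrow> 'a \<Rightarrow> 'a) h"
      "\<forall>v\<in>BA. h v = (if v = b then 1 else 0)"
      using core[OF BA(2), of "\<lambda>v. if v = b then 1 else 0"] by blast
    then show "\<exists>h. Vector_Spaces.linear scale ((*) :: 'a \<Rightarrow> 'a \<Rightarrow> 'a) h \<and>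
        (\<forall>v\<in>BA. h v = (if v = b then 1 else 0))" by blast
  qed
  from bchoice[OF this] obtain H where H0: "\<forall>b\<in>BA. Vector_Spaces.linear scale ((*) :: 'a \<Rightarrow> 'a \<Rightarrow> 'a) (H b) \<and>
        (\<forall>v\<in>BA. H b v = (if v = b then 1 else 0))" by blast
  have H: "\<And>b. b \<in> BA \<Longrightarrow> Vector_Spaces.linear scale ((*) :: 'a \<Rightarrow> 'a \<Rightarrow> 'a) (H b)"
      "\<And>b v. b \<in> BA \<Longrightarrow> v \<in> BA \<Longrightarrow> H b v = (if v = b then 1 else 0)"
    using H0 by auto
  have H0': "H b 0 = 0" if "b \<in> BA" for b using lin0[OF H(1)[OF that]] .
  have Hadd: "H b (x + y) = H b x + H b y" if "b \<in> BA" for b x y using linadd[OF H(1)[OF that]] .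
  have Hsc: "H b (c *s x) = c * H b x" if "b \<in> BA" for b c x using linscale[OF H(1)[OF that]] .
  define e where "e b = (\<lambda>x. if x \<in> A then H b x else 0)" for b
  have eval: "e b v = (if v = b then 1 else 0)" if "b \<in> BA" "v \<in> BA" for b v
    using that H(2) BA(1) by (auto simp: e_def)
  have inj: "inj_on e BA"
    by (rule inj_onI) (metis eval one_neq_zero)
  have E: "e ` BA \<subseteq> dual_space scale A"
    using restr_dual[OF H(1) A] by (auto simp: e_def)
  have span: "dual_space scale A \<subseteq> D.span (e ` BA)"
  proof
    fix \<phi> assume p: "\<phi> \<in> dual_space scale A"
    have eq: "\<phi> = (\<Sum>b\<in>BA. dual_scale (\<phi> b) (e b))"
    proof
      fix x
      show "\<phi> x = (\<Sum>b\<in>BA. dual_scale (\<phi> b) (e b)) x"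
      proof (cases "x \<in> A")
        case False then show ?thesis using p
          by (simp add: sum_fun_apply' dual_scale_def e_def dual_space_def)
      next
        case True
        then have "x \<in> span BA" using BA by simp
        then have "x \<in> A \<and> \<phi> x = (\<Sum>b\<in>BA. \<phi> b * H b x)"
        proof (induction rule: span_induct)
          case base
          show ?case
          proof (rule subspaceI)
            show "0 \<in> Collect (\<lambda>x. x \<in> A \<and> \<phi> x = (\<Sum>b\<in>BA. \<phi> b * H b x))"
            proof -
              have "\<phi> 0 = 0" using p A subspace_0 lin_on_zero unfolding dual_space_def by blast
              moreover have "(\<Sum>b\<in>BA. \<phi> b * H b 0) = 0" by (simp add: H0')
              ultimately show ?thesis using A subspace_0 by simp
            qed
            show "x + y \<in> Collect (\<lambda>x. x \<in> A \<and> \<phi> x = (\<Sum>b\<in>BA. \<phi> b * H b x))"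
              if hx: "x \<in> Collect (\<lambda>x. x \<in> A \<and> \<phi> x = (\<Sum>b\<in>BA. \<phi> b * H b x))"
                 and hy: "y \<in> Collect (\<lambda>x. x \<in> A \<and> \<phi> x = (\<Sum>b\<in>BA. \<phi> b * H b x))" for x y
            proof -
              have "(\<Sum>b\<in>BA. \<phi> b * H b (x + y)) = (\<Sum>b\<in>BA. \<phi> b * H b x + \<phi> b * H b y)"
                by (rule sum.cong) (simp_all add: Hadd distrib_left)
              also have "\<dots> = (\<Sum>b\<in>BA. \<phi> b * H b x) + (\<Sum>b\<in>BA. \<phi> b * H b y)"
                by (rule sum.distrib)
              finally have s1: "(\<Sum>b\<in>BA. \<phi> b * H b (x + y)) = (\<Sum>b\<in>BA. \<phi> b * H b x) + (\<Sum>b\<in>BA. \<phi> b * H b y)" .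
              have xA: "x \<in> A" "y \<in> A" using hx hy by auto
              have "x + y \<in> A" using xA A subspace_add by blast
              moreover have "\<phi> (x + y) = \<phi> x + \<phi> y" using p xA by (simp add: dual_space_def lin_on_def)
              ultimately show ?thesis using s1 hx hy by simp
            qed
            show "c *s x \<in> Collect (\<lambda>x. x \<in> A \<and> \<phi> x = (\<Sum>b\<in>BA. \<phi> b * H b x))"
              if hx: "x \<in> Collect (\<lambda>x. x \<in> A \<and> \<phi> x = (\<Sum>b\<in>BA. \<phi> b * H b x))" for c x
            proof -
              have "(\<Sum>b\<in>BA. \<phi> b * H b (c *s x)) = (\<Sum>b\<in>BA. c * (\<phi> b * H b x))"
                by (rule sum.cong) (simp_all add: Hsc algebra_simps)
              also have "\<dots> = c * (\<Sum>b\<in>BA. \<phi> b * H b x)"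
                by (rule sum_distrib_left[symmetric])
              finally have s1: "(\<Sum>b\<in>BA. \<phi> b * H b (c *s x)) = c * (\<Sum>b\<in>BA. \<phi> b * H b x)" .
              have xA: "x \<in> A" using hx by auto
              have "c *s x \<in> A" using xA A subspace_scale by blast
              moreover have "\<phi> (c *s x) = c * \<phi> x" using p xA by (simp add: dual_space_def lin_on_def)
              ultimately show ?thesis using s1 hx by simp
            qed
          qed
        next
          case (step v)
          have "(\<Sum>b\<in>BA. \<phi> b * H b v) = (\<Sum>b\<in>BA. if b = v then \<phi> b else 0)"
            using step H(2) by (intro sum.cong) auto
          also have "\<dots> = \<phi> v" using step finBA by simp
          finally show ?case using step BA by auto
        qed
        then show ?thesis using True
          by (simp add: sum_fun_apply' dual_scale_def e_def)
      qed
    qed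
    show "\<phi> \<in> D.span (e ` BA)"
      by (subst eq, intro D.span_sum D.span_scale D.span_base) auto
  qed
  have indep: "D.independent (e ` BA)"
    unfolding D.independent_explicit_module
  proof (intro allI impI)
    fix t u v assume t: "finite t" "t \<subseteq> e ` BA" and s: "(\<Sum>v\<in>t. dual_scale (u v) v) = 0"
      and v: "v \<in> t"
    obtain b where b: "b \<in> BA" "v = e b" using t v by blast
    have "0 = (\<Sum>w\<in>t. dual_scale (u w) w) b" using s by simp
    also have "\<dots> = (\<Sum>w\<in>t. u w * w b)" by (simp add: sum_fun_apply' dual_scale_def)
    also have "\<dots> = (\<Sum>w\<in>t. if w = v then u w else 0)"
    proof (intro sum.cong refl)
      fix w assume "w \<in> t"
      then obtain b' where b': "b' \<in> BA" "w = e b'" using t by blast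
      show "u w * w b = (if w = v then u w else 0)"
        using eval[OF b'(1) b(1)] inj_on_eq_iff[OF inj b'(1) b(1)] b(2) b'(2) by simp
    qed
    also have "\<dots> = u v" using t(1) v by (simp add: sum.delta)
    finally show "u v = 0" by simp
  qed
  have "card (e ` BA) = D.dim (dual_space scale A)"
    by (rule D.basis_card_eq_dim[OF E span indep])
  then show ?thesis using dA card_image[OF inj] by simp
qed

end



lemma dn_peel: "dncomp dn (k + 1) (Suc n) = dncomp dn k n \<circ> dn k"
proof (induction n)
  case 0 then show ?case by simp
next
  case (Suc n)
  have eq: "k + 1 - int (Suc n) - 1 = k - int n - 1" by simp
  have "dncomp dn (k + 1) (Suc (Suc n)) = dn (k + 1 - int (Suc n) - 1) \<circ> dncomp dn (k + 1) (Suc n)"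
    by (simp only: dncomp.simps)
  also have "\<dots> = dn (k - int n - 1) \<circ> (dncomp dn k n \<circ> dn k)"
    by (simp only: eq Suc.IH)
  also have "\<dots> = dncomp dn k (Suc n) \<circ> dn k"
    by (simp only: dncomp.simps comp_assoc)
  finally show ?case .
qed

lemma up_peel: "upcomp up k (Suc n) = upcomp up (k + 1) n \<circ> up k"
proof (induction n)
  case 0 then show ?case by simp
next
  case (Suc n)
  have eq: "k + int (Suc n) = k + 1 + int n" by simp
  have "upcomp up k (Suc (Suc n)) = up (k + int (Suc n)) \<circ> upcomp up k (Suc n)"
    by (simp only: upcomp.simps)
  also have "\<dots> = up (k + 1 + int n) \<circ> (upcomp up (k + 1) n \<circ> up k)"
    by (simp only: eq Suc.IH)
  also have "\<dots> = upcomp up (k + 1) (Suc n) \<circ> up k"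
    by (simp only: upcomp.simps comp_assoc)
  finally show ?case .
qed

lemma dual_map_comp:
  assumes "\<forall>x\<in>A. f x \<in> B"
  shows "dual_map A f (dual_map B g \<phi>) = dual_map A (g \<circ> f) \<phi>"
  using assms by (auto simp: dual_map_def fun_eq_iff)

context vector_space
begin

lemma nontriv_one:
  assumes A: "subspace A"
  shows "A = {0} \<longleftrightarrow> dual_space scale A = {(0 :: 'b \<Rightarrow> 'a)}"
proof
  assume "A = {0}"
  show "dual_space scale A = {(0 :: 'b \<Rightarrow> 'a)}"
  proof
    show "dual_space scale A \<subseteq> {(0 :: 'b \<Rightarrow> 'a)}"
    proof
      fix \<phi> :: "'b \<Rightarrow> 'a" assume p: "\<phi> \<in> dual_space scale A"
      have "lin_on scale (*) A UNIV \<phi>" using p by (simp add: dual_space_def)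
      then have "\<phi> 0 = 0" using lin_on_zero \<open>A = {0}\<close> by blast
      then have "\<phi> = 0"
      proof -
        assume z: "\<phi> 0 = 0"
        show "\<phi> = 0"
        proof
          fix x show "\<phi> x = 0 x"
            using p \<open>A = {0}\<close> z by (cases "x = 0") (auto simp: dual_space_def)
        qed
      qed
      then show "\<phi> \<in> {0}" by simp
    qed
    show "{(0 :: 'b \<Rightarrow> 'a)} \<subseteq> dual_space scale A" using dual_zero by simp
  qed
next
  assume d: "dual_space scale A = {(0 :: 'b \<Rightarrow> 'a)}"
  show "A = {0}"
  proof (rule ccontr)
    assume "A \<noteq> {0}"
    then obtain y where y: "y \<in> A" "y \<noteq> 0" using subspace_0[OF A] by blast
    obtain \<phi> :: "'b \<Rightarrow> 'a" where "\<phi> \<in> dual_space scale A" "\<phi> y \<noteq> 0"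
      using sep[OF A _ subspace_single_0 y(1)] y(2) subspace_0[OF A] by blast
    then show False using d by auto
  qed
qed

lemma special_one:
  assumes A: "subspace A" and B: "subspace B" and f: "lin_on scale scale A B f"
    and g: "lin_on scale scale B A g"
  shows "(\<forall>x\<in>A. g (f x) = 0) \<longleftrightarrow>
    (\<forall>\<phi>\<in>dual_space scale A. dual_map A f (dual_map B g \<phi>) = (0 :: 'b \<Rightarrow> 'a))"
proof
  assume h: "\<forall>x\<in>A. g (f x) = 0"
  show "\<forall>\<phi>\<in>dual_space scale A. dual_map A f (dual_map B g \<phi>) = (0 :: 'b \<Rightarrow> 'a)"
  proof
    fix \<phi> :: "'b \<Rightarrow> 'a" assume p: "\<phi> \<in> dual_space scale A"
    have "\<phi> 0 = 0" using p lin_on_zero subspace_0[OF A] by (auto simp: dual_space_def)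
    then show "dual_map A f (dual_map B g \<phi>) = 0"
      using h f by (auto simp: dual_map_def fun_eq_iff lin_on_def)
  qed
next
  assume h: "\<forall>\<phi>\<in>dual_space scale A. dual_map A f (dual_map B g \<phi>) = (0 :: 'b \<Rightarrow> 'a)"
  show "\<forall>x\<in>A. g (f x) = 0"
  proof (rule ballI, rule ccontr)
    fix x assume x: "x \<in> A" and nz: "g (f x) \<noteq> 0"
    have fx: "f x \<in> B" using f x by (auto simp: lin_on_def)
    then have z: "g (f x) \<in> A" using g by (auto simp: lin_on_def)
    obtain \<phi> :: "'b \<Rightarrow> 'a" where p: "\<phi> \<in> dual_space scale A" "\<phi> (g (f x)) \<noteq> 0"
      using sep[OF A _ subspace_single_0 z] nz subspace_0[OF A] by blast
    have "dual_map A f (dual_map B g \<phi>) x = \<phi> (g (f x))"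
      using x fx by (simp add: dual_map_def)
    then show False using h p by simp
  qed
qed

lemma kernel_subspace:
  assumes A: "subspace A" and f: "lin_on scale scale A B f"
  shows "subspace {x \<in> A. f x = 0}"
proof (rule subspaceI)
  show "0 \<in> {x \<in> A. f x = 0}" using subspace_0[OF A] lin_on_zero[OF f] by simp
  show "x + y \<in> {x \<in> A. f x = 0}" if "x \<in> {x \<in> A. f x = 0}" "y \<in> {x \<in> A. f x = 0}" for x y
    using that f subspace_add[OF A] by (simp add: lin_on_def)
  show "c *s x \<in> {x \<in> A. f x = 0}" if "x \<in> {x \<in> A. f x = 0}" for c x
    using that f subspace_scale[OF A] by (simp add: lin_on_def)
qed

lemma linked_one:
  assumes A: "subspace A" and B1: "subspace B1" and B2: "subspace B2"
    and f1: "lin_on scale scale A B1 f1" and f2: "lin_on scale scale A B2 f2"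
  shows "{x \<in> A. f2 x = 0 \<and> f1 x = 0} = {0} \<longleftrightarrow>
    {a + b | a b. a \<in> dual_map A f1 ` dual_space scale B1 \<and> b \<in> dual_map A f2 ` dual_space scale B2}
      = (dual_space scale A :: ('b \<Rightarrow> 'a) set)"
proof
  assume K: "{x \<in> A. f2 x = 0 \<and> f1 x = 0} = {0}"
  show "{a + b | a b. a \<in> dual_map A f1 ` dual_space scale B1 \<and> b \<in> dual_map A f2 ` dual_space scale B2}
      = (dual_space scale A :: ('b \<Rightarrow> 'a) set)"
  proof
    show "{a + b | a b. a \<in> dual_map A f1 ` dual_space scale B1 \<and> b \<in> dual_map A f2 ` dual_space scale B2}
      \<subseteq> (dual_space scale A :: ('b \<Rightarrow> 'a) set)"
    proof
      fix \<psi> assume "\<psi> \<in> {a + b | a b. a \<in> dual_map A f1 ` dual_space scale B1 \<and> b \<in> dual_map A f2 ` dual_space scale B2}"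
      then obtain a b where ab: "\<psi> = a + b" "a \<in> dual_map A f1 ` dual_space scale B1" "b \<in> dual_map A f2 ` dual_space scale B2"
        by blast
      obtain \<phi>1 \<phi>2 where "\<phi>1 \<in> dual_space scale B1" "a = dual_map A f1 \<phi>1"
        "\<phi>2 \<in> dual_space scale B2" "b = dual_map A f2 \<phi>2" using ab(2,3) by blast
      then have "a \<in> dual_space scale A" "b \<in> dual_space scale A"
        using dual_map_in[OF A f1] dual_map_in[OF A f2] by simp_all
      then show "\<psi> \<in> dual_space scale A" using ab(1) dual_add[OF A] by simp
    qed
  next
    show "(dual_space scale A :: ('b \<Rightarrow> 'a) set) \<subseteq>
      {a + b | a b. a \<in> dual_map A f1 ` dual_space scale B1 \<and> b \<in> dual_map A f2 ` dual_space scale B2}"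
    proof
      fix \<psi> :: "'b \<Rightarrow> 'a" assume p: "\<psi> \<in> dual_space scale A"
      have plin: "lin_on scale (*) A UNIV \<psi>" and pout: "\<forall>x. x \<notin> A \<longrightarrow> \<psi> x = 0"
        using p by (auto simp: dual_space_def)
      have p0: "\<psi> 0 = 0" using lin_on_zero[OF plin subspace_0[OF A]] .
      define K1 where "K1 = {x \<in> A. f1 x = 0}"
      have K1s: "subspace K1" unfolding K1_def by (rule kernel_subspace[OF A f1])
      have K1A: "K1 \<subseteq> A" unfolding K1_def by blast
      obtain \<phi>2 where p2: "\<phi>2 \<in> dual_space scale B2" "\<forall>x\<in>K1. \<phi>2 (f2 x) = \<psi> x"
      proof (rule transp[OF K1s B2 lin_on_subset[OF f2 K1A] lin_on_subset[OF plin K1A]])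
        show "\<forall>x\<in>K1. f2 x = 0 \<longrightarrow> \<psi> x = 0"
        proof (intro ballI impI)
          fix x assume "x \<in> K1" "f2 x = 0"
          then have "x \<in> {x \<in> A. f2 x = 0 \<and> f1 x = 0}" unfolding K1_def by blast
          then have "x = 0" using K by blast
          then show "\<psi> x = 0" using p0 by simp
        qed
      qed blast
      have p2lin: "lin_on scale (*) B2 UNIV \<phi>2" using p2(1) by (simp add: dual_space_def)
      define \<psi>' where "\<psi>' x = \<psi> x - \<phi>2 (f2 x)" for x
      have lin': "lin_on scale (*) A UNIV \<psi>'"
        unfolding lin_on_def
      proof (intro conjI ballI allI)
        fix x y assume xy: "x \<in> A" "y \<in> A"
        have "f2 (x + y) = f2 x + f2 y" using f2 xy by (simp add: lin_on_def)
        moreover have "f2 x \<in> B2" "f2 y \<in> B2" using f2 xy by (auto simp: lin_on_def)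
        ultimately have "\<phi>2 (f2 (x + y)) = \<phi>2 (f2 x) + \<phi>2 (f2 y)" using p2lin by (simp add: lin_on_def)
        moreover have "\<psi> (x + y) = \<psi> x + \<psi> y" using plin xy by (simp add: lin_on_def)
        ultimately show "\<psi>' (x + y) = \<psi>' x + \<psi>' y" unfolding \<psi>'_def by (simp add: algebra_simps)
      next
        fix c x assume x: "x \<in> A"
        have "f2 (c *s x) = c *s f2 x" using f2 x by (simp add: lin_on_def)
        moreover have "f2 x \<in> B2" using f2 x by (auto simp: lin_on_def)
        ultimately have "\<phi>2 (f2 (c *s x)) = c * \<phi>2 (f2 x)" using p2lin by (simp add: lin_on_def)
        moreover have "\<psi> (c *s x) = c * \<psi> x" using plin x by (simp add: lin_on_def)
        ultimately show "\<psi>' (c *s x) = c * \<psi>' x" unfolding \<psi>'_def by (simp add: algebra_simps)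
      qed simp
      obtain \<phi>1 where p1: "\<phi>1 \<in> dual_space scale B1" "\<forall>x\<in>A. \<phi>1 (f1 x) = \<psi>' x"
      proof (rule transp[OF A B1 f1 lin'])
        show "\<forall>x\<in>A. f1 x = 0 \<longrightarrow> \<psi>' x = 0"
          using p2(2) unfolding K1_def \<psi>'_def by auto
      qed blast
      have "\<psi> = dual_map A f1 \<phi>1 + dual_map A f2 \<phi>2"
      proof
        fix x show "\<psi> x = (dual_map A f1 \<phi>1 + dual_map A f2 \<phi>2) x"
        proof (cases "x \<in> A")
          case True then show ?thesis using p1(2) unfolding \<psi>'_def by (simp add: dual_map_def)
        next
          case False then show ?thesis using pout by (simp add: dual_map_def)
        qed
      qed
      moreover have "dual_map A f1 \<phi>1 \<in> dual_map A f1 ` dual_space scale B1" using p1(1) by (rule imageI)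
      moreover have "dual_map A f2 \<phi>2 \<in> dual_map A f2 ` dual_space scale B2" using p2(1) by (rule imageI)
      ultimately show "\<psi> \<in> {a + b | a b. a \<in> dual_map A f1 ` dual_space scale B1 \<and> b \<in> dual_map A f2 ` dual_space scale B2}"
        by blast
    qed
  qed
next
  assume S: "{a + b | a b. a \<in> dual_map A f1 ` dual_space scale B1 \<and> b \<in> dual_map A f2 ` dual_space scale B2}
      = (dual_space scale A :: ('b \<Rightarrow> 'a) set)"
  show "{x \<in> A. f2 x = 0 \<and> f1 x = 0} = {0}"
  proof (rule ccontr)
    assume "{x \<in> A. f2 x = 0 \<and> f1 x = 0} \<noteq> {0}"
    moreover have "0 \<in> {x \<in> A. f2 x = 0 \<and> f1 x = 0}"
      using subspace_0[OF A] lin_on_zero[OF f1] lin_on_zero[OF f2] by simp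
    ultimately obtain x where x: "x \<in> A" "f2 x = 0" "f1 x = 0" "x \<noteq> 0" by blast
    obtain \<psi> :: "'b \<Rightarrow> 'a" where p: "\<psi> \<in> dual_space scale A" "\<psi> x \<noteq> 0"
      using sep[OF A _ subspace_single_0 x(1)] x(4) subspace_0[OF A] by blast
    then have "\<psi> \<in> {a + b | a b. a \<in> dual_map A f1 ` dual_space scale B1 \<and> b \<in> dual_map A f2 ` dual_space scale B2}"
      using S by simp
    then obtain a b where ab: "\<psi> = a + b" "a \<in> dual_map A f1 ` dual_space scale B1" "b \<in> dual_map A f2 ` dual_space scale B2"
      by blast
    obtain \<phi>1 \<phi>2 where ph0: "\<phi>1 \<in> dual_space scale B1" "a = dual_map A f1 \<phi>1"
        "\<phi>2 \<in> dual_space scale B2" "b = dual_map A f2 \<phi>2" using ab(2,3) by blast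
    have ph: "\<phi>1 \<in> dual_space scale B1" "\<phi>2 \<in> dual_space scale B2"
      "\<psi> = dual_map A f1 \<phi>1 + dual_map A f2 \<phi>2" using ph0 ab(1) by simp_all
    have "\<phi>1 0 = 0" using ph(1) lin_on_zero subspace_0[OF B1] by (auto simp: dual_space_def)
    moreover have "\<phi>2 0 = 0" using ph(2) lin_on_zero subspace_0[OF B2] by (auto simp: dual_space_def)
    ultimately have "\<psi> x = 0" using ph(3) x by (simp add: dual_map_def)
    then show False using p(2) by simp
  qed
qed

end



context vector_space
begin

lemma up_lin:
  assumes lu: "\<And>i. lin_on scale scale (U i) (U (i+1)) (up i)"
  shows "lin_on scale scale (U k) (U (k + int n)) (upcomp up k n)"
proof (induction n)
  case 0 then show ?case by (simp add: lin_on_def)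
next
  case (Suc n)
  have "lin_on scale scale (U k) (U (k + int n + 1)) (up (k + int n) \<circ> upcomp up k n)"
    by (rule lin_on_comp[OF Suc.IH lu])
  moreover have eq: "k + int (Suc n) = k + int n + 1" by simp
  ultimately show ?case by (simp only: upcomp.simps)
qed

lemma dn_lin:
  assumes ld: "\<And>i. lin_on scale scale (U (i+1)) (U i) (dn i)"
  shows "lin_on scale scale (U k) (U (k - int n)) (dncomp dn k n)"
proof (induction n)
  case 0 then show ?case by (simp add: lin_on_def)
next
  case (Suc n)
  have l: "lin_on scale scale (U (k - int n - 1 + 1)) (U (k - int n - 1)) (dn (k - int n - 1))"
    by (rule ld)
  have "k - int n - 1 + 1 = k - int n" by simp
  then have "lin_on scale scale (U (k - int n)) (U (k - int n - 1)) (dn (k - int n - 1))"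
    using l by simp
  then have "lin_on scale scale (U k) (U (k - int n - 1)) (dn (k - int n - 1) \<circ> dncomp dn k n)"
    by (rule lin_on_comp[OF Suc.IH])
  moreover have eq: "k - int (Suc n) = k - int n - 1" by simp
  ultimately show ?case by (simp only: dncomp.simps)
qed

lemma dualA:
  assumes ld: "\<And>i. lin_on scale scale (U (i+1)) (U i) (dn i)"
    and p: "\<forall>x. x \<notin> U i \<longrightarrow> \<phi> x = (0 :: 'a)"
  shows "upcomp (dual_up U dn) i n \<phi> = dual_map (U (i + int n)) (dncomp dn (i + int n) n) \<phi>"
proof (induction n)
  case 0
  show ?case using p by (auto simp: dual_map_def fun_eq_iff)
next
  case (Suc n)
  have m: "\<forall>x\<in>U (i + int n + 1). dn (i + int n) x \<in> U (i + int n)"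
    using ld[of "i + int n"] by (simp add: lin_on_def)
  have "upcomp (dual_up U dn) i (Suc n) \<phi> = dual_up U dn (i + int n) (upcomp (dual_up U dn) i n \<phi>)"
    by simp
  also have "\<dots> = dual_map (U (i + int n + 1)) (dn (i + int n))
      (dual_map (U (i + int n)) (dncomp dn (i + int n) n) \<phi>)"
    by (simp add: Suc.IH dual_up_def)
  also have "\<dots> = dual_map (U (i + int n + 1)) (dncomp dn (i + int n) n \<circ> dn (i + int n)) \<phi>"
    by (rule dual_map_comp[OF m])
  also have "\<dots> = dual_map (U (i + int n + 1)) (dncomp dn (i + int n + 1) (Suc n)) \<phi>"
    by (simp only: dn_peel)
  also have "i + int n + 1 = i + int (Suc n)" by simp
  finally show ?case .
qed

lemma dualB:
  assumes lu: "\<And>i. lin_on scale scale (U i) (U (i+1)) (up i)"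
    and p: "\<forall>x. x \<notin> U i \<longrightarrow> \<phi> x = (0 :: 'a)"
  shows "dncomp (dual_dn U up) i n \<phi> = dual_map (U (i - int n)) (upcomp up (i - int n) n) \<phi>"
proof (induction n)
  case 0
  show ?case using p by (auto simp: dual_map_def fun_eq_iff)
next
  case (Suc n)
  have e: "i - int n - 1 + 1 = i - int n" by simp
  have m: "\<forall>x\<in>U (i - int n - 1). up (i - int n - 1) x \<in> U (i - int n)"
    using lu[of "i - int n - 1"] e by (simp add: lin_on_def)
  have "dncomp (dual_dn U up) i (Suc n) \<phi> = dual_dn U up (i - int n - 1) (dncomp (dual_dn U up) i n \<phi>)"
    by simp
  also have "\<dots> = dual_map (U (i - int n - 1)) (up (i - int n - 1))
      (dual_map (U (i - int n)) (upcomp up (i - int n) n) \<phi>)"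
    by (simp add: Suc.IH dual_dn_def)
  also have "\<dots> = dual_map (U (i - int n - 1)) (upcomp up (i - int n) n \<circ> up (i - int n - 1)) \<phi>"
    by (rule dual_map_comp[OF m])
  also have "\<dots> = dual_map (U (i - int n - 1)) (upcomp up (i - int n - 1) (Suc n)) \<phi>"
    by (simp only: up_peel e)
  also have "i - int n - 1 = i - int (Suc n)" by simp
  finally show ?case .
qed

lemma supp_one:
  assumes sub: "\<And>i. subspace (U i)"
    and lu: "\<And>i. lin_on scale scale (U i) (U (i+1)) (up i)"
    and ld: "\<And>i. lin_on scale scale (U (i+1)) (U i) (dn i)"
  shows "comp_map up dn j i ` U j = U i \<longleftrightarrow>
    inj_on (comp_map (dual_up U dn) (dual_dn U up) i j) (dual_space scale (U i) :: ('b \<Rightarrow> 'a) set)"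
proof (cases "i \<le> j")
  case True
  define n where "n = nat (j - i)"
  have jn: "j = i + int n" using True by (simp add: n_def)
  have c1: "comp_map (dual_up U dn) (dual_dn U up) i j = upcomp (dual_up U dn) i n"
    using True by (simp add: comp_map_def n_def)
  have c2: "comp_map up dn j i = dncomp dn j n"
  proof (cases "j \<le> i")
    case True
    then have "n = 0" "j = i" using jn by auto
    then show ?thesis by (simp add: comp_map_def)
  next
    case False
    then show ?thesis by (simp add: comp_map_def n_def)
  qed
  have T: "lin_on scale scale (U j) (U i) (dncomp dn j n)"
    using dn_lin[where U=U and dn=dn, OF ld, of j n] jn by simp
  have "inj_on (comp_map (dual_up U dn) (dual_dn U up) i j) (dual_space scale (U i) :: ('b \<Rightarrow> 'a) set)
     \<longleftrightarrow> inj_on (dual_map (U j) (dncomp dn j n)) (dual_space scale (U i) :: ('b \<Rightarrow> 'a) set)"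
    unfolding c1
  proof (rule inj_on_cong)
    fix \<phi> :: "'b \<Rightarrow> 'a" assume "\<phi> \<in> dual_space scale (U i)"
    then have "\<forall>x. x \<notin> U i \<longrightarrow> \<phi> x = 0" by (simp add: dual_space_def)
    then show "upcomp (dual_up U dn) i n \<phi> = dual_map (U j) (dncomp dn j n) \<phi>"
      using dualA[where U=U and dn=dn, OF ld] jn by simp
  qed
  then show ?thesis using surj_inj[OF sub sub T] c2 by simp
next
  case False
  define n where "n = nat (i - j)"
  have jn: "i = j + int n" using False by (simp add: n_def)
  have c1: "comp_map (dual_up U dn) (dual_dn U up) i j = dncomp (dual_dn U up) i n"
    using False by (simp add: comp_map_def n_def)
  have c2: "comp_map up dn j i = upcomp up j n"
    using False by (simp add: comp_map_def n_def)
  have T: "lin_on scale scale (U j) (U i) (upcomp up j n)"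
    using up_lin[where U=U and up=up, OF lu, of j n] jn by simp
  have ij: "i - int n = j" using jn by simp
  have "inj_on (comp_map (dual_up U dn) (dual_dn U up) i j) (dual_space scale (U i) :: ('b \<Rightarrow> 'a) set)
     \<longleftrightarrow> inj_on (dual_map (U j) (upcomp up j n)) (dual_space scale (U i) :: ('b \<Rightarrow> 'a) set)"
    unfolding c1
  proof (rule inj_on_cong)
    fix \<phi> :: "'b \<Rightarrow> 'a" assume "\<phi> \<in> dual_space scale (U i)"
    then have "\<forall>x. x \<notin> U i \<longrightarrow> \<phi> x = 0" by (simp add: dual_space_def)
    then show "dncomp (dual_dn U up) i n \<phi> = dual_map (U j) (upcomp up j n) \<phi>"
      using dualB[where U=U and up=up, OF lu] ij by simp
  qed
  then show ?thesis using surj_inj[OF sub sub T] c2 by simp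
qed

end



theorem proposition2p5:
  fixes s :: "'a::field \<Rightarrow> 'v::ab_group_add \<Rightarrow> 'v"
    and U :: "int \<Rightarrow> 'v set" and up dn :: "int \<Rightarrow> 'v \<Rightarrow> 'v"
  assumes "is_rep s U up dn"
  defines "U' \<equiv> dual_U s U" and "up' \<equiv> dual_up U dn" and "dn' \<equiv> dual_dn U up"
  shows "(pure s U \<longleftrightarrow> pure dual_scale U')
    \<and> (nontrivial U \<longleftrightarrow> nontrivial U')
    \<and> (special_chain U up dn \<longleftrightarrow> special_chain U' up' dn')
    \<and> (linked_chain U up dn \<longleftrightarrow> colinked_chain U' up' dn')
    \<and> (\<forall>H. is_support U up dn H \<longleftrightarrow> is_cosupport U' up' dn' H)"
proof -
  have vs: "vector_space s" using assms(1) by (simp add: is_rep_def)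
  have sub: "\<And>i. module.subspace s (U i)"
    and fin: "\<And>i. \<exists>B. finite B \<and> B \<subseteq> U i \<and> module.span s B = U i"
    and lu: "\<And>i. lin_on s s (U i) (U (i+1)) (up i)"
    and ld: "\<And>i. lin_on s s (U (i+1)) (U i) (dn i)"
    using assms(1) by (auto simp: is_rep_def fin_dim_subspace_def)
  have U'i: "U' i = dual_space s (U i)" for i by (simp add: U'_def dual_U_def)
  have up'i: "up' i = dual_map (U (i+1)) (dn i)" for i by (simp add: up'_def dual_up_def)
  have dn'i: "dn' i = dual_map (U i) (up i)" for i by (simp add: dn'_def dual_dn_def)
  have P1: "pure s U \<longleftrightarrow> pure dual_scale U'"
  proof -
    have dd: "vector_space.dim dual_scale (U' i) = vector_space.dim s (U i)" for i
    proof -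
      obtain B where "finite B" "B \<subseteq> U i" "module.span s B = U i" using fin[of i] by blast
      then show ?thesis unfolding U'i using vector_space.dim_dual[OF vs sub] by blast
    qed
    show ?thesis by (simp add: pure_def dd)
  qed
  have P2: "nontrivial U \<longleftrightarrow> nontrivial U'"
    unfolding nontrivial_def U'i by (simp only: vector_space.nontriv_one[OF vs sub])
  have P3: "special_chain U up dn \<longleftrightarrow> special_chain U' up' dn'"
  proof -
    have a: "(\<forall>x\<in>U i. dn i (up i x) = 0) \<longleftrightarrow> (\<forall>\<phi>\<in>U' i. dn' i (up' i \<phi>) = 0)" for i
      unfolding U'i up'i dn'i by (rule vector_space.special_one[OF vs sub sub lu ld])
    have b: "(\<forall>x\<in>U (i+1). up i (dn i x) = 0) \<longleftrightarrow> (\<forall>\<phi>\<in>U' (i+1). up' i (dn' i \<phi>) = 0)" for i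
      unfolding U'i up'i dn'i by (rule vector_space.special_one[OF vs sub sub ld lu])
    show ?thesis unfolding special_chain_def by (simp only: a b)
  qed
  have P4: "linked_chain U up dn \<longleftrightarrow> colinked_chain U' up' dn'"
  proof -
    have c: "({x \<in> U i. dn (i - 1) x = 0 \<and> up i x = 0} = {0}) \<longleftrightarrow>
      ({a + b | a b. a \<in> dn' i ` U' (i+1) \<and> b \<in> up' (i - 1) ` U' (i - 1)} = U' i)" for i
    proof -
      have l2: "lin_on s s (U i) (U (i - 1)) (dn (i - 1))" using ld[of "i - 1"] by simp
      show ?thesis
        unfolding U'i up'i dn'i
        using vector_space.linked_one[OF vs sub sub sub lu l2] by (simp only: diff_add_cancel)
    qed
    show ?thesis unfolding linked_chain_def colinked_chain_def by (simp only: c P3)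
  qed
  have P5: "\<forall>H. is_support U up dn H \<longleftrightarrow> is_cosupport U' up' dn' H"
  proof -
    have eq: "up' = dual_up U dn" "dn' = dual_dn U up" by (simp_all add: up'_def dn'_def)
    have d: "comp_map up dn j i ` U j = U i \<longleftrightarrow> inj_on (comp_map up' dn' i j) (U' i)" for i j
      unfolding U'i eq by (rule vector_space.supp_one[where U=U and up=up and dn=dn, OF vs sub lu ld])
    show ?thesis unfolding is_support_def is_cosupport_def by (simp add: d)
  qed
  show ?thesis using P1 P2 P3 P4 P5 by (intro conjI)
qed


end
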